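(* Suppose $\mathcal U$ is a smooth and strongly stable EDPM (with smoothness constant $d_2$). Then for any $K,T\ge1$, $$\tilde{\mathcal R}(\pi_{p^*},T)\le\frac{d_2}{2}\max_{i\in\mathbb K}\|F^{(i)}\|^2\,\frac{K^2}{T}.$$ Alternatively, if $\mathcal U$ is quasiconvex, then $p^*$ can be chosen to be a standard basis vector $e_{i^*}$ of $\mathbb R^K$, and for this choice $\tilde{\mathcal R}(\pi_{p^*},T)=0$ for all $T\ge1$.
   Context: Bandit setting: $K\ge1$, $\mathbb K=\{1,\dots,K\}$; arm $i$ produces i.i.d. rewards $X^{(i)}_1,X^{(i)}_2,\dots$ with distribution function $F^{(i)}$, all rewards mutually independent. $\Delta_{K-1}$ is the probability simplex, $F_p=\sum_ip_iF^{(i)}$, $\mathcal D^\Delta=\{F_p:p\in\Delta_{K-1}\}$; $\hat F^{(i)}_t(y)=\frac1t\sum_{s\le t}\mathbf 1\{X^{(i)}_s\le y\}$; $\hat{\mathcal D}$ is the set of empirical distribution functions $y\mapsto\frac1t\sum_{s\le t}\mathbf 1\{x_s\le y\}$ of all finite real sequences. $(L,\|\cdot\|)$ is a Banach space of bounded functions on $\mathbb R$ containing $\mathcal D^\Delta\cup\hat{\mathcal D}$, $\mathcal U:L\to\mathbb R$, and $L(L,\mathbb R)$ is the space of bounded linear functionals on $L$. Strongly stable: (1) there exist $b>0,q\ge1$ with $|\mathcal U(F)-\mathcal U(G)|\le b(\|F-G\|+\|F-G\|^q)$ for all $F\in\mathcal D^\Delta$, $G\in\mathcal D^\Delta\cup\hat{\mathcal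 D}$; (2) there is $a>0$ with $\mathbb P(\|\hat F^{(i)}_t-F^{(i)}\|\ge x)\le2\exp(-atx^2)$ for all $i,x>0,t\ge1$. Smooth: there exist $d_1,d_2\ge0$, $M_0>0$ and a map $A:L\to L(L,\mathbb R)$, $F\mapsto A_F$, such that for every $F\in\mathcal D^\Delta$: $|A_F(G-F)|\le d_1\|G-F\|$ for all $G\in\mathcal D^\Delta\cup\hat{\mathcal D}$, and $|\mathcal U(G)-\mathcal U(F)-A_F(G-F)|\le\frac12d_2\|G-F\|^2$ for all $G\in\mathcal D^\Delta\cup\{f\in\hat{\mathcal D}:\|F-f\|\le M_0\}$. Quasiconvex: $\mathcal U(\lambda F+(1-\lambda)G)\le\max\{\mathcal U(F),\mathcal U(G)\}$. Let $p^*\in\arg\max_{p\in\Delta_{K-1}}\mathcal U(F_p)$. $\pi_{p^*}$ is the policy whose actions $\pi_1,\pi_2,\dots\in\mathbb K$ are i.i.d. (independent of rewards) with $\mathbb P(\pi_t=i)=p^*_i$; $\tau_i(T)=\sum_{t\le T}\mathbf 1\{\pi_t=i\}$, $\tilde F^\pi_T=\frac1T\sum_i\tau_i(T)F^{(i)}$, and $\tilde{\mathcal R}(\pi,T)=\mathbb E[\mathcal U(F_{p^*})-\mathcal U(\tilde F^\pi_T)]$. *)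

theory Defs
  imports "HOL-Probability.Probability"
begin

type_synonym rfun = "real \<Rightarrow> real"

definition fun_banach :: "rfun set \<Rightarrow> (rfun \<Rightarrow> real) \<Rightarrow> bool" where
  "fun_banach L nrm \<longleftrightarrow>
     (\<forall>f\<in>L. \<exists>B. \<forall>y. \<bar>f y\<bar> \<le> B) \<and>
     (\<lambda>_. 0) \<in> L \<and>
     (\<forall>f\<in>L. \<forall>g\<in>L. (\<lambda>y. f y + g y) \<in> L) \<and>
     (\<forall>c. \<forall>f\<in>L. (\<lambda>y. c * f y) \<in> L) \<and>
     (\<forall>f\<in>L. nrm f \<ge> 0) \<and>
     (\<forall>f\<in>L. nrm f = 0 \<longleftrightarrow> f = (\<lambda>_. 0)) \<and>
     (\<forall>c. \<forall>f\<in>L. nrm (\<lambda>y. c * f y) = \<bar>c\<bar> * nrm f) \<and>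
     (\<forall>f\<in>L. \<forall>g\<in>L. nrm (\<lambda>y. f y + g y) \<le> nrm f + nrm g) \<and>
     (\<forall>s :: nat \<Rightarrow> rfun. (\<forall>n. s n \<in> L) \<and>
          (\<forall>e>0. \<exists>N. \<forall>m\<ge>N. \<forall>n\<ge>N. nrm (\<lambda>y. s m y - s n y) < e)
          \<longrightarrow> (\<exists>f\<in>L. \<forall>e>0. \<exists>N. \<forall>n\<ge>N. nrm (\<lambda>y. s n y - f y) < e))"

definition bounded_lin_functional :: "rfun set \<Rightarrow> (rfun \<Rightarrow> real) \<Rightarrow> (rfun \<Rightarrow> real) \<Rightarrow> bool" where
  "bounded_lin_functional L nrm \<phi> \<longleftrightarrow>
     (\<forall>f\<in>L. \<forall>g\<in>L. \<phi> (\<lambda>y. f y + g y) = \<phi> f + \<phi> g) \<and>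
     (\<forall>c. \<forall>f\<in>L. \<phi> (\<lambda>y. c * f y) = c * \<phi> f) \<and>
     (\<exists>C. \<forall>f\<in>L. \<bar>\<phi> f\<bar> \<le> C * nrm f)"

text \<open>Probability prob_simplex over arms 1..K (only coordinates 1..K matter).\<close>
definition prob_simplex :: "nat \<Rightarrow> (nat \<Rightarrow> real) set" where
  "prob_simplex K = {p. (\<forall>i\<in>{1..K}. p i \<ge> 0) \<and> (\<Sum>i\<in>{1..K}. p i) = 1}"

definition mix :: "nat \<Rightarrow> (nat \<Rightarrow> rfun) \<Rightarrow> (nat \<Rightarrow> real) \<Rightarrow> rfun" where
  "mix K F p = (\<lambda>y. \<Sum>i\<in>{1..K}. p i * F i y)"

definition Dsimplex :: "nat \<Rightarrow> (nat \<Rightarrow> rfun) \<Rightarrow> rfun set" where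
  "Dsimplex K F = {mix K F p | p. p \<in> prob_simplex K}"

definition emp :: "real list \<Rightarrow> rfun" where
  "emp xs = (\<lambda>y. real (length (filter (\<lambda>x. x \<le> y) xs)) / real (length xs))"

definition Dhat :: "rfun set" where
  "Dhat = {emp xs | xs. xs \<noteq> []}"

definition emp_arm :: "(nat \<Rightarrow> nat \<Rightarrow> 'w \<Rightarrow> real) \<Rightarrow> nat \<Rightarrow> nat \<Rightarrow> 'w \<Rightarrow> rfun" where
  "emp_arm X i t \<omega> = emp (map (\<lambda>s. X i s \<omega>) [1..<t+1])"

definition strongly_stable ::
  "rfun set \<Rightarrow> (rfun \<Rightarrow> real) \<Rightarrow> (rfun \<Rightarrow> real) \<Rightarrow> nat \<Rightarrow> (nat \<Rightarrow> rfun)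
   \<Rightarrow> 'w measure \<Rightarrow> (nat \<Rightarrow> nat \<Rightarrow> 'w \<Rightarrow> real) \<Rightarrow> bool" where
  "strongly_stable L nrm U K F M X \<longleftrightarrow>
     (\<exists>b>0. \<exists>q\<ge>1. \<forall>G\<in>Dsimplex K F. \<forall>H\<in>Dsimplex K F \<union> Dhat.
        \<bar>U G - U H\<bar> \<le> b * (nrm (\<lambda>y. G y - H y) + nrm (\<lambda>y. G y - H y) powr q)) \<and>
     (\<exists>a>0. \<forall>i\<in>{1..K}. \<forall>x>0. \<forall>t\<ge>1.
        measure M {\<omega>\<in>space M. nrm (\<lambda>y. emp_arm X i t \<omega> y - F i y) \<ge> x}
          \<le> 2 * exp (- a * real t * x\<^sup>2))"

definition smooth ::
  "rfun set \<Rightarrow> (rfun \<Rightarrow> real) \<Rightarrow> (rfun \<Rightarrow> real) \<Rightarrow> nat \<Rightarrow> (nat \<Rightarrow> rfun) \<Rightarrow> real \<Rightarrow> bool" where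
  "smooth L nrm U K F d2 \<longleftrightarrow> d2 \<ge> 0 \<and>
     (\<exists>d1\<ge>0. \<exists>M0>0. \<exists>A :: rfun \<Rightarrow> rfun \<Rightarrow> real.
        (\<forall>G\<in>L. bounded_lin_functional L nrm (A G)) \<and>
        (\<forall>G\<in>Dsimplex K F.
           (\<forall>H\<in>Dsimplex K F \<union> Dhat. \<bar>A G (\<lambda>y. H y - G y)\<bar> \<le> d1 * nrm (\<lambda>y. H y - G y)) \<and>
           (\<forall>H\<in>Dsimplex K F \<union> {f\<in>Dhat. nrm (\<lambda>y. G y - f y) \<le> M0}.
              \<bar>U H - U G - A G (\<lambda>y. H y - G y)\<bar> \<le> d2 / 2 * (nrm (\<lambda>y. H y - G y))\<^sup>2)))"

definition quasiconvex :: "rfun set \<Rightarrow> (rfun \<Rightarrow> real) \<Rightarrow> bool" where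
  "quasiconvex L U \<longleftrightarrow>
     (\<forall>G\<in>L. \<forall>H\<in>L. \<forall>c\<in>{0..1::real}.
        U (\<lambda>y. c * G y + (1 - c) * H y) \<le> max (U G) (U H))"

definition is_opt :: "(rfun \<Rightarrow> real) \<Rightarrow> nat \<Rightarrow> (nat \<Rightarrow> rfun) \<Rightarrow> (nat \<Rightarrow> real) \<Rightarrow> bool" where
  "is_opt U K F p \<longleftrightarrow> p \<in> prob_simplex K \<and> (\<forall>p'\<in>prob_simplex K. U (mix K F p') \<le> U (mix K F p))"

text \<open>Law of a single action of the randomized policy pi_p.\<close>
definition act_pmf :: "nat \<Rightarrow> (nat \<Rightarrow> real) \<Rightarrow> nat pmf" where
  "act_pmf K p = embed_pmf (\<lambda>i. if i \<in> {1..K} then p i else 0)"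

text \<open>tilde F^pi_T for an action path a (a t is the action at round t).\<close>
definition Ftilde :: "nat \<Rightarrow> (nat \<Rightarrow> rfun) \<Rightarrow> (nat \<Rightarrow> nat) \<Rightarrow> nat \<Rightarrow> rfun" where
  "Ftilde K F a T = (\<lambda>y. \<Sum>i\<in>{1..K}. real (card {t\<in>{1..T}. a t = i}) / real T * F i y)"

text \<open>tilde R(pi_p, T) relative to the optimum pstar: actions pi_1..pi_T i.i.d. with law p.\<close>
definition regret :: "(rfun \<Rightarrow> real) \<Rightarrow> nat \<Rightarrow> (nat \<Rightarrow> rfun) \<Rightarrow> (nat \<Rightarrow> real) \<Rightarrow> (nat \<Rightarrow> real) \<Rightarrow> nat \<Rightarrow> real" where
  "regret U K F pstar p T =
     measure_pmf.expectation (Pi_pmf {1..T} 0 (\<lambda>_. act_pmf K p))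
       (\<lambda>a. U (mix K F pstar) - U (Ftilde K F a T))"

definition basis :: "nat \<Rightarrow> nat \<Rightarrow> real" where
  "basis i = (\<lambda>j. if j = i then 1 else 0)"

end

theory Submission
  imports Defs
begin

lemma act_pmf_pmf:
  assumes "p \<in> prob_simplex K"
  shows "pmf (act_pmf K p) j = (if j \<in> {1..K} then p j else 0)"
proof -
  have nn: "\<forall>x. 0 \<le> (if x \<in> {1..K} then p x else 0)" using assms by (auto simp: prob_simplex_def)
  have "(\<integral>\<^sup>+x. ennreal (if x \<in> {1..K} then p x else 0) \<partial>count_space UNIV)
        = (\<Sum>x\<in>{1..K}. ennreal (if x \<in> {1..K} then p x else 0))"
    by (rule nn_integral_count_space') auto
  also have "\<dots> = ennreal (\<Sum>x\<in>{1..K}. p x)"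
    using assms by (subst sum_ennreal) (auto simp: prob_simplex_def)
  also have "\<dots> = 1" using assms by (simp add: prob_simplex_def)
  finally show ?thesis unfolding act_pmf_def
    by (subst pmf_embed_pmf) (use nn in auto)
qed

lemma act_pmf_set:
  assumes "p \<in> prob_simplex K"
  shows "set_pmf (act_pmf K p) \<subseteq> {1..K}"
  using act_pmf_pmf[OF assms] by (auto simp: set_pmf_eq split: if_splits)

lemma fin_Pi:
  assumes "finite A" "finite (set_pmf q)"
  shows "finite (set_pmf (Pi_pmf A d (\<lambda>_. q)))"
  using assms by (simp add: set_Pi_pmf finite_PiE_dflt)

lemma marg:
  fixes q :: "'b pmf"
  assumes "finite A" "t \<in> A" "finite (set_pmf q)"
  shows "measure_pmf.expectation (Pi_pmf A d (\<lambda>_. q)) (\<lambda>a. if a t = i then 1 else 0 :: real) = pmf q i"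
proof -
  define f where "f = (\<lambda>x (v::'b). if x = t then (if v = i then 1 else 0) else (1::real))"
  have "measure_pmf.expectation (Pi_pmf A d (\<lambda>_. q)) (\<lambda>y. \<Prod>x\<in>A. f x (y x)) =
             (\<Prod>x\<in>A. measure_pmf.expectation q (\<lambda>v. f x v))"
    by (rule expectation_prod_Pi_pmf) (auto simp: f_def assms integrable_measure_pmf_finite)
  moreover have "\<And>y. (\<Prod>x\<in>A. f x (y x)) = (if y t = i then 1 else 0)"
    using assms by (simp add: f_def prod.If_cases)
  moreover have "(\<Prod>x\<in>A. measure_pmf.expectation q (\<lambda>v. f x v)) = measure_pmf.expectation q (\<lambda>v. if v = i then 1 else 0)"
  proof -
    have "\<And>x. measure_pmf.expectation q (\<lambda>v. f x v) = (if x = t then measure_pmf.expectation q (\<lambda>v. if v = i then 1 else 0) else 1)"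
      by (simp add: f_def)
    then show ?thesis using assms by (simp add: prod.delta)
  qed
  moreover have "measure_pmf.expectation q (\<lambda>v. if v = i then 1 else 0 :: real) = pmf q i"
  proof -
    have "(\<lambda>v. if v = i then 1 else 0 :: real) = indicator {i}" by (auto simp: indicator_def)
    then show ?thesis by (simp add: pmf.rep_eq)
  qed
  ultimately show ?thesis by simp
qed

lemma prod_two:
  fixes h :: "'a \<Rightarrow> real"
  assumes "finite A" "s \<in> A" "t \<in> A" "s \<noteq> t" "\<And>x. x \<noteq> s \<Longrightarrow> x \<noteq> t \<Longrightarrow> h x = 1"
  shows "(\<Prod>x\<in>A. h x) = h s * h t"
proof -
  have "(\<Prod>x\<in>{s,t}. h x) = (\<Prod>x\<in>A. h x)"
    by (rule prod.mono_neutral_left) (use assms in auto)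
  then show ?thesis using assms by simp
qed

lemma pair:
  fixes q :: "'b pmf"
  assumes "finite A" "s \<in> A" "t \<in> A" "s \<noteq> t" "finite (set_pmf q)"
  shows "measure_pmf.expectation (Pi_pmf A d (\<lambda>_. q))
     (\<lambda>a. (if a s = i then 1 else 0) * (if a t = i then 1 else 0) :: real) = (pmf q i)^2"
proof -
  define f where "f = (\<lambda>x (v::'b). if x = s \<or> x = t then (if v = i then 1 else 0) else (1::real))"
  have "measure_pmf.expectation (Pi_pmf A d (\<lambda>_. q)) (\<lambda>y. \<Prod>x\<in>A. f x (y x)) =
             (\<Prod>x\<in>A. measure_pmf.expectation q (\<lambda>v. f x v))"
    by (rule expectation_prod_Pi_pmf) (auto simp: f_def assms integrable_measure_pmf_finite)
  moreover have "\<And>y. (\<Prod>x\<in>A. f x (y x)) = (if y s = i then 1 else 0) * (if y t = i then 1 else 0)"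
    by (subst prod_two[OF assms(1-4)]) (auto simp: f_def)
  moreover have "(\<Prod>x\<in>A. measure_pmf.expectation q (\<lambda>v. f x v)) = (measure_pmf.expectation q (\<lambda>v. if v = i then 1 else 0))^2"
    by (subst prod_two[OF assms(1-4)]) (auto simp: f_def power2_eq_square)
  moreover have "measure_pmf.expectation q (\<lambda>v. if v = i then 1 else 0 :: real) = pmf q i"
  proof -
    have "(\<lambda>v. if v = i then 1 else 0 :: real) = indicator {i}" by (auto simp: indicator_def)
    then show ?thesis by (simp add: pmf.rep_eq)
  qed
  ultimately show ?thesis by simp
qed

lemma moments:
  fixes q :: "'b pmf" and d :: 'b and i :: 'b
  assumes A: "finite A" and fq: "finite (set_pmf q)"
  defines "P \<equiv> Pi_pmf A d (\<lambda>_. q)"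
  defines "N \<equiv> (\<lambda>a. \<Sum>t\<in>A. if a t = i then 1 else 0 :: real)"
  shows "measure_pmf.expectation P N = card A * pmf q i"
    and "measure_pmf.expectation P (\<lambda>a. (N a)^2) = card A * pmf q i + card A * (real (card A) - 1) * (pmf q i)^2"
proof -
  have int: "\<And>f::_\<Rightarrow>real. integrable P f"
    unfolding P_def by (rule integrable_measure_pmf_finite) (rule fin_Pi[OF A fq])
  show "measure_pmf.expectation P N = card A * pmf q i"
    unfolding N_def by (subst Bochner_Integration.integral_sum) (auto simp: int[unfolded P_def] P_def marg[OF A _ fq])
  have sq: "\<And>a. (N a)^2 = (\<Sum>s\<in>A. \<Sum>t\<in>A. (if a s = i then 1 else 0) * (if a t = i then 1 else 0))"
    unfolding N_def by (simp add: power2_eq_square sum_product)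
  have inner: "(\<Sum>t\<in>A. measure_pmf.expectation P (\<lambda>a. (if a s = i then 1 else 0) * (if a t = i then 1 else 0 :: real)))
      = pmf q i + (real (card A) - 1) * (pmf q i)^2" if s: "s \<in> A" for s
  proof -
    have "(\<Sum>t\<in>A. measure_pmf.expectation P (\<lambda>a. (if a s = i then 1 else 0) * (if a t = i then 1 else 0 :: real)))
       = measure_pmf.expectation P (\<lambda>a. (if a s = i then 1 else 0) * (if a s = i then 1 else 0 :: real))
         + (\<Sum>t\<in>A-{s}. measure_pmf.expectation P (\<lambda>a. (if a s = i then 1 else 0) * (if a t = i then 1 else 0 :: real)))"
      using A s by (simp add: sum.remove)
    also have "\<dots> = pmf q i + (\<Sum>t\<in>A-{s}. (pmf q i)^2)"
    proof -
      have e1: "(\<lambda>a. (if a s = i then 1 else 0) * (if a s = i then 1 else 0 :: real)) = (\<lambda>a. if a s = i then 1 else 0)"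
        by auto
      have "(\<Sum>t\<in>A-{s}. measure_pmf.expectation P (\<lambda>a. (if a s = i then 1 else 0) * (if a t = i then 1 else 0 :: real)))
         = (\<Sum>t\<in>A-{s}. (pmf q i)^2)"
        by (rule sum.cong) (use A s fq in \<open>auto simp: P_def pair\<close>)
      then show ?thesis unfolding e1 using A s fq
        by (simp add: marg P_def)
    qed
    also have "\<dots> = pmf q i + (real (card A) - 1) * (pmf q i)^2"
    proof -
      have "card A \<ge> 1" using A s card_0_eq[OF A] by fastforce
      then show ?thesis using A s by (simp add: card_Diff_singleton of_nat_diff)
    qed
    finally show ?thesis .
  qed
  show "measure_pmf.expectation P (\<lambda>a. (N a)^2) = card A * pmf q i + card A * (real (card A) - 1) * (pmf q i)^2"
    unfolding sq
    apply (subst Bochner_Integration.integral_sum, simp add: int)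
    apply (subst Bochner_Integration.integral_sum, simp add: int)
    apply (simp add: inner algebra_simps)
    done
qed

lemma var_bound:
  fixes q :: "'b pmf" and d :: 'b and i :: 'b
  assumes A: "finite A" "A \<noteq> {}" and fq: "finite (set_pmf q)"
  shows "measure_pmf.expectation (Pi_pmf A d (\<lambda>_. q))
     (\<lambda>a. ((\<Sum>t\<in>A. if a t = i then 1 else 0 :: real) / card A - pmf q i)^2) \<le> 1 / card A"
proof -
  define P where "P = Pi_pmf A d (\<lambda>_. q)"
  define N where "N = (\<lambda>a. \<Sum>t\<in>A. if a t = i then 1 else 0 :: real)"
  define n where "n = real (card A)"
  define p where "p = pmf q i"
  have n: "n > 0" using A by (simp add: n_def card_gt_0_iff)
  have p: "0 \<le> p" "p \<le> 1" by (auto simp: p_def pmf_le_1)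
  have int: "\<And>f::_\<Rightarrow>real. integrable P f"
    unfolding P_def by (rule integrable_measure_pmf_finite) (rule fin_Pi[OF A(1) fq])
  have m1: "measure_pmf.expectation P N = n * p" and m2: "measure_pmf.expectation P (\<lambda>a. (N a)^2) = n * p + n * (n - 1) * p^2"
    using moments[OF A(1) fq, of d i] by (simp_all add: P_def N_def n_def p_def)
  have eq: "\<And>a. (N a / n - p)^2 = (1/n^2) * (N a)^2 - (2*p/n) * N a + p^2"
    using n by (simp add: power2_eq_square field_simps)
  have "measure_pmf.expectation P (\<lambda>a. (N a / n - p)^2)
      = (1/n^2) * measure_pmf.expectation P (\<lambda>a. (N a)^2) - (2*p/n) * measure_pmf.expectation P N + p^2"
    unfolding eq by (simp add: int)
  also have "\<dots> = (p - p^2) / n" unfolding m1 m2 using n by (simp add: power2_eq_square field_simps)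
  also have "\<dots> \<le> 1 / n" proof (intro divide_right_mono)
    have "p * p \<ge> 0" by simp
    then show "p - p^2 \<le> 1" using p unfolding power2_eq_square by linarith
  qed (use n in simp)
  finally show ?thesis by (simp add: P_def N_def n_def p_def)
qed

lemma fb_add: "fun_banach L nrm \<Longrightarrow> f \<in> L \<Longrightarrow> g \<in> L \<Longrightarrow> (\<lambda>y. f y + g y) \<in> L"
  unfolding fun_banach_def by blast
lemma fb_scale: "fun_banach L nrm \<Longrightarrow> f \<in> L \<Longrightarrow> (\<lambda>y. c * f y) \<in> L"
  unfolding fun_banach_def by blast
lemma fb_nrm_add: "fun_banach L nrm \<Longrightarrow> f \<in> L \<Longrightarrow> g \<in> L \<Longrightarrow> nrm (\<lambda>y. f y + g y) \<le> nrm f + nrm g"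
  unfolding fun_banach_def by blast
lemma fb_nrm_scale: "fun_banach L nrm \<Longrightarrow> f \<in> L \<Longrightarrow> nrm (\<lambda>y. c * f y) = \<bar>c\<bar> * nrm f"
  unfolding fun_banach_def by blast
lemma fb_nrm_nonneg: "fun_banach L nrm \<Longrightarrow> f \<in> L \<Longrightarrow> nrm f \<ge> 0"
  unfolding fun_banach_def by blast
lemma bl_add: "bounded_lin_functional L nrm \<phi> \<Longrightarrow> f \<in> L \<Longrightarrow> g \<in> L \<Longrightarrow> \<phi> (\<lambda>y. f y + g y) = \<phi> f + \<phi> g"
  unfolding bounded_lin_functional_def by blast
lemma bl_scale: "bounded_lin_functional L nrm \<phi> \<Longrightarrow> f \<in> L \<Longrightarrow> \<phi> (\<lambda>y. c * f y) = c * \<phi> f"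
  unfolding bounded_lin_functional_def by blast

lemma lin_sum:
  assumes L: "fun_banach L nrm" and phi: "bounded_lin_functional L nrm \<phi>"
    and I: "finite I" and f: "\<forall>i\<in>I. f i \<in> L"
  shows "(\<lambda>y. \<Sum>i\<in>I. c i * f i y) \<in> L \<and> \<phi> (\<lambda>y. \<Sum>i\<in>I. c i * f i y) = (\<Sum>i\<in>I. c i * \<phi> (f i))
     \<and> nrm (\<lambda>y. \<Sum>i\<in>I. c i * f i y) \<le> (\<Sum>i\<in>I. \<bar>c i\<bar> * nrm (f i))"
  using I f
proof (induction I rule: finite_induct)
  case empty
  have z: "(\<lambda>_. 0) \<in> L" using L by (simp add: fun_banach_def)
  have sc: "\<forall>c. \<forall>f\<in>L. \<phi> (\<lambda>y. c * f y) = c * \<phi> f" using phi unfolding bounded_lin_functional_def by blast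
  have "\<phi> (\<lambda>y. 0 * (\<lambda>_. 0::real) y) = 0 * \<phi> (\<lambda>_. 0)" using bspec[OF spec[OF sc, of 0] z] .
  moreover have "nrm (\<lambda>_. 0) = 0" using L z unfolding fun_banach_def by blast
  ultimately show ?case using z by simp
next
  case (insert x I)
  let ?g = "\<lambda>y. \<Sum>i\<in>I. c i * f i y"
  let ?h = "\<lambda>y. c x * f x y"
  have IH: "?g \<in> L" "\<phi> ?g = (\<Sum>i\<in>I. c i * \<phi> (f i))" "nrm ?g \<le> (\<Sum>i\<in>I. \<bar>c i\<bar> * nrm (f i))"
    using insert by auto
  have fx: "f x \<in> L" using insert by auto
  have h: "?h \<in> L" using fb_scale[OF L fx] .
  have e: "(\<lambda>y. \<Sum>i\<in>insert x I. c i * f i y) = (\<lambda>y. ?h y + ?g y)"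
    using insert by simp
  have "(\<lambda>y. ?h y + ?g y) \<in> L" using fb_add[OF L h IH(1)] .
  moreover have "\<phi> (\<lambda>y. ?h y + ?g y) = \<phi> ?h + \<phi> ?g" using bl_add[OF phi h IH(1)] .
  moreover have "\<phi> ?h = c x * \<phi> (f x)" using bl_scale[OF phi fx] .
  moreover have "nrm (\<lambda>y. ?h y + ?g y) \<le> nrm ?h + nrm ?g" using fb_nrm_add[OF L h IH(1)] .
  moreover have "nrm ?h = \<bar>c x\<bar> * nrm (f x)" using fb_nrm_scale[OF L fx] .
  ultimately show ?case unfolding e using insert IH by simp
qed

lemma mix_cong: "(\<And>j. j \<in> {1..K} \<Longrightarrow> p j = p' j) \<Longrightarrow> mix K F p = mix K F p'"
  unfolding mix_def by (rule ext, rule sum.cong) auto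

lemma basis_simplex: "i \<in> {1..K} \<Longrightarrow> basis i \<in> prob_simplex K"
  unfolding prob_simplex_def basis_def by (auto simp: sum.delta)

lemma mix_basis: "i \<in> {1..K} \<Longrightarrow> mix K F (basis i) = F i"
proof (rule ext)
  fix y assume i: "i \<in> {1..K}"
  have "(\<Sum>j\<in>{1..K}. basis i j * F j y) = (\<Sum>j\<in>{1..K}. if j = i then F j y else 0)"
    by (rule sum.cong) (auto simp: basis_def)
  then show "mix K F (basis i) y = F i y" using i by (simp add: mix_def sum.delta)
qed

lemma F_in_L: "Dsimplex K F \<subseteq> L \<Longrightarrow> i \<in> {1..K} \<Longrightarrow> F i \<in> L"
  using mix_basis[of i K F] basis_simplex[of i K] unfolding Dsimplex_def by force

lemma simplex_le1: "p \<in> prob_simplex K \<Longrightarrow> j \<in> {1..K} \<Longrightarrow> p j \<le> 1"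
proof -
  assume p: "p \<in> prob_simplex K" and j: "j \<in> {1..K}"
  have "p j \<le> (\<Sum>i\<in>{1..K}. p i)"
    by (rule member_le_sum) (use p j in \<open>auto simp: prob_simplex_def\<close>)
  then show ?thesis using p by (simp add: prob_simplex_def)
qed

lemma qc_support:
  assumes qc: "quasiconvex L U" and LD: "Dsimplex K F \<subseteq> L"
    and S: "finite S" "S \<noteq> {}"
  shows "S \<subseteq> {1..K} \<Longrightarrow> p \<in> prob_simplex K \<Longrightarrow> (\<forall>j\<in>{1..K}-S. p j = 0)
     \<Longrightarrow> U (mix K F p) \<le> Max ((\<lambda>i. U (mix K F (basis i))) ` S)"
  using S
proof (induction S arbitrary: p rule: finite_ne_induct)
  case (singleton x)
  have "mix K F p = mix K F (basis x)"
  proof (rule mix_cong)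
    fix j assume j: "j \<in> {1..K}"
    have x: "x \<in> {1..K}" using singleton by auto
    have "(\<Sum>i\<in>{1..K}. p i) = p x + (\<Sum>i\<in>{1..K}-{x}. p i)" using x by (simp add: sum.remove)
    also have "(\<Sum>i\<in>{1..K}-{x}. p i) = 0" using singleton by (intro sum.neutral) auto
    finally have "(\<Sum>i\<in>{1..K}. p i) = p x" by simp
    then have "p x = 1" using singleton by (simp add: prob_simplex_def)
    then show "p j = basis x j" using singleton j by (auto simp: basis_def)
  qed
  then show ?case by simp
next
  case (insert x S)
  let ?g = "\<lambda>i. U (mix K F (basis i))"
  have x: "x \<in> {1..K}" using insert by auto
  have pnn: "\<forall>j\<in>{1..K}. p j \<ge> 0" and psum: "(\<Sum>j\<in>{1..K}. p j) = 1"
    using insert by (auto simp: prob_simplex_def)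
  have sumx: "(\<Sum>j\<in>{1..K}. p j) = p x + (\<Sum>j\<in>{1..K}-{x}. p j)"
    using x by (simp add: sum.remove)
  show ?case
  proof (cases "p x = 1")
    case True
    have rest0: "(\<Sum>j\<in>{1..K}-{x}. p j) = 0" using sumx psum True by simp
    have "\<forall>j\<in>{1..K}-{x}. p j = 0"
      using sum_nonneg_eq_0_iff[of "{1..K}-{x}" p] rest0 pnn by auto
    then have "mix K F p = mix K F (basis x)"
      by (intro mix_cong) (auto simp: basis_def True)
    moreover have "?g x \<le> Max (?g ` insert x S)" using insert by (intro Max_ge) auto
    ultimately show ?thesis by simp
  next
    case False
    define c where "c = p x"
    have c1: "c < 1" using False simplex_le1[OF insert.prems(2) x] by (simp add: c_def)
    have c0: "c \<ge> 0" using pnn x by (simp add: c_def)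
    define q where "q = (\<lambda>j. if j = x then 0 else p j / (1 - c))"
    have qs: "q \<in> prob_simplex K"
    proof -
      have "(\<Sum>j\<in>{1..K}. q j) = q x + (\<Sum>j\<in>{1..K}-{x}. q j)" using x by (simp add: sum.remove)
      also have "\<dots> = (\<Sum>j\<in>{1..K}-{x}. p j / (1 - c))" by (simp add: q_def)
      also have "\<dots> = (\<Sum>j\<in>{1..K}-{x}. p j) / (1 - c)" by (simp add: sum_divide_distrib)
      also have "\<dots> = 1" using sumx psum c1 by (simp add: c_def)
      finally show ?thesis using pnn c1 by (auto simp: prob_simplex_def q_def)
    qed
    have qsupp: "\<forall>j\<in>{1..K}-S. q j = 0" using insert.prems(3) by (auto simp: q_def)
    have IH: "U (mix K F q) \<le> Max (?g ` S)"
      using insert.IH[OF _ qs qsupp] insert.prems(1) by auto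
    have mixeq: "mix K F p = (\<lambda>y. c * mix K F (basis x) y + (1 - c) * mix K F q y)"
    proof (rule ext)
      fix y
      have "mix K F p y = p x * F x y + (\<Sum>j\<in>{1..K}-{x}. p j * F j y)"
        unfolding mix_def using x by (simp add: sum.remove)
      moreover have "mix K F q y = (\<Sum>j\<in>{1..K}-{x}. p j / (1 - c) * F j y)"
        unfolding mix_def using x by (simp add: sum.remove q_def)
      moreover have "(1 - c) * (\<Sum>j\<in>{1..K}-{x}. p j / (1 - c) * F j y) = (\<Sum>j\<in>{1..K}-{x}. p j * F j y)"
        using c1 by (simp add: sum_distrib_left)
      ultimately show "mix K F p y = c * mix K F (basis x) y + (1 - c) * mix K F q y"
        using mix_basis[OF x, of F] by (simp add: c_def)
    qed
    have GL: "mix K F (basis x) \<in> L" using LD basis_simplex[OF x] unfolding Dsimplex_def by auto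
    have HL: "mix K F q \<in> L" using LD qs unfolding Dsimplex_def by auto
    have "U (mix K F p) \<le> max (?g x) (U (mix K F q))"
      unfolding mixeq using qc GL HL c0 c1 unfolding quasiconvex_def by auto
    also have "\<dots> \<le> max (?g x) (Max (?g ` S))" using IH by simp
    also have "\<dots> = Max (?g ` insert x S)" using insert by simp
    finally show ?thesis .
  qed
qed

lemma card_ind: "finite A \<Longrightarrow> real (card {t\<in>A. P t}) = (\<Sum>t\<in>A. if P t then 1 else 0)"
  by (simp add: sum.If_cases Int_def)

lemma Ftilde_mix: "Ftilde K F a T = mix K F (\<lambda>j. real (card {t\<in>{1..T}. a t = j}) / real T)"
  unfolding Ftilde_def mix_def by simp

lemma supp_Pi:
  fixes T :: nat and q :: "nat pmf"
  assumes "a \<in> set_pmf (Pi_pmf {1..T} 0 (\<lambda>_. q))" "t \<in> {1..T}"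
  shows "a t \<in> set_pmf q"
  using assms(1) unfolding set_Pi_pmf[of "{1..T}", OF finite_atLeastAtMost] PiE_dflt_def using assms(2) by auto

lemma w_simplex:
  assumes T: "T \<ge> 1" and a: "\<forall>t\<in>{1..T}. a t \<in> {1..K}"
  shows "(\<lambda>j. real (card {t\<in>{1..T}. a t = j}) / real T) \<in> prob_simplex K"
proof -
  have "(\<Sum>j\<in>{1..K}. real (card {t\<in>{1..T}. a t = j})) = (\<Sum>j\<in>{1..K}. \<Sum>t\<in>{1..T}. if a t = j then 1 else 0)"
    by (rule sum.cong[OF refl], rule card_ind) simp
  also have "\<dots> = (\<Sum>t\<in>{1..T}. \<Sum>j\<in>{1..K}. if a t = j then 1 else 0)" by (rule sum.swap)
  also have "\<dots> = (\<Sum>t\<in>{1..T}. 1)" using a by (intro sum.cong) (auto simp: sum.delta')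
  finally have "(\<Sum>j\<in>{1..K}. real (card {t\<in>{1..T}. a t = j})) = T" by simp
  then show ?thesis using T by (auto simp: prob_simplex_def simp flip: sum_divide_distrib)
qed

lemma part2:
  assumes K: "K \<ge> 1" and LD: "Dsimplex K F \<union> Dhat \<subseteq> L" and qc: "quasiconvex L U"
  shows "\<exists>i\<in>{1..K}. is_opt U K F (basis i) \<and> (\<forall>T\<ge>1. regret U K F (basis i) (basis i) T = 0)"
proof -
  define g where "g = (\<lambda>i. U (mix K F (basis i)))"
  have ne: "{1..K} \<noteq> {}" using K by auto
  have "Max (g ` {1..K}) \<in> g ` {1..K}" by (rule Max_in) (use ne in auto)
  then obtain i where i0: "Max (g ` {1..K}) = g i" "i \<in> {1..K}"
    by (rule imageE)
  have i: "i \<in> {1..K}" "g i = Max (g ` {1..K})" using i0 by auto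
  have opt: "is_opt U K F (basis i)"
    unfolding is_opt_def
  proof (intro conjI ballI)
    show "basis i \<in> prob_simplex K" using basis_simplex[OF i(1)] .
    fix p' assume p': "p' \<in> prob_simplex K"
    have "U (mix K F p') \<le> Max (g ` {1..K})"
      unfolding g_def by (rule qc_support[OF qc _ _ ne]) (use LD p' in auto)
    then show "U (mix K F p') \<le> U (mix K F (basis i))" using i(2) by (simp add: g_def)
  qed
  have reg: "regret U K F (basis i) (basis i) T = 0" if T: "T \<ge> 1" for T
  proof -
    define P where "P = Pi_pmf {1..T} 0 (\<lambda>_. act_pmf K (basis i))"
    have bs: "basis i \<in> prob_simplex K" using basis_simplex[OF i(1)] .
    have zero: "U (Ftilde K F a T) = U (mix K F (basis i))" if a: "a \<in> set_pmf P" for a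
    proof -
      have at: "a t = i" if t: "t \<in> {1..T}" for t
      proof -
        have "a t \<in> set_pmf (act_pmf K (basis i))" using supp_Pi[OF a[unfolded P_def] t] .
        then have "pmf (act_pmf K (basis i)) (a t) \<noteq> 0" by (simp add: set_pmf_iff)
        then show ?thesis using act_pmf_pmf[OF bs] by (auto simp: basis_def split: if_splits)
      qed
      have "Ftilde K F a T = mix K F (basis i)"
        unfolding Ftilde_mix
      proof (rule mix_cong)
        fix j assume j: "j \<in> {1..K}"
        show "real (card {t \<in> {1..T}. a t = j}) / real T = basis i j"
        proof (cases "j = i")
          case True
          then have "{t \<in> {1..T}. a t = j} = {1..T}" using at by blast
          then show ?thesis using True T by (simp add: basis_def)
        next
          case False
          then have "{t \<in> {1..T}. a t = j} = {}" using at by blast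
          then show ?thesis using False by (simp add: basis_def)
        qed
      qed
      then show ?thesis by simp
    qed
    have "regret U K F (basis i) (basis i) T = measure_pmf.expectation P (\<lambda>_. 0)"
      unfolding regret_def P_def[symmetric]
      by (rule integral_cong_AE) (auto simp: AE_measure_pmf_iff zero)
    then show ?thesis by simp
  qed
  show ?thesis using i(1) opt reg by blast
qed

lemma part1:
  assumes K: "K \<ge> 1" and L: "fun_banach L nrm" and LD: "Dsimplex K F \<union> Dhat \<subseteq> L"
    and sm: "smooth L nrm U K F d2" and opt: "is_opt U K F pstar" and T: "T \<ge> 1"
  shows "regret U K F pstar pstar T \<le> d2 / 2 * (MAX i\<in>{1..K}. (nrm (F i))\<^sup>2) * real K ^ 2 / real T"
proof -
  have d2: "d2 \<ge> 0" using sm by (simp add: smooth_def)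
  obtain A where Abl: "\<forall>G\<in>L. bounded_lin_functional L nrm (A G)"
    and Asm: "\<forall>G\<in>Dsimplex K F. \<forall>H\<in>Dsimplex K F.
              \<bar>U H - U G - A G (\<lambda>y. H y - G y)\<bar> \<le> d2 / 2 * (nrm (\<lambda>y. H y - G y))\<^sup>2"
    using sm unfolding smooth_def by blast
  have ps: "pstar \<in> prob_simplex K" using opt by (simp add: is_opt_def)
  define G where "G = mix K F pstar"
  have GD: "G \<in> Dsimplex K F" unfolding G_def Dsimplex_def using ps by auto
  have GL: "G \<in> L" using GD LD by auto
  have FL: "\<forall>j\<in>{1..K}. F j \<in> L" using F_in_L[of K F L] LD by auto
  define Mx where "Mx = (MAX i\<in>{1..K}. (nrm (F i))\<^sup>2)"
  have Mx: "\<And>j. j \<in> {1..K} \<Longrightarrow> (nrm (F j))\<^sup>2 \<le> Mx" unfolding Mx_def by (rule Max_ge) auto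
  have Mx0: "Mx \<ge> 0" using Mx[of 1] K by (meson atLeastAtMost_iff le_refl order.trans zero_le_power2)
  define q where "q = act_pmf K pstar"
  define P where "P = Pi_pmf {1..T} 0 (\<lambda>_. q)"
  have fq: "finite (set_pmf q)" unfolding q_def using act_pmf_set[OF ps] finite_subset by blast
  have int: "\<And>f::_\<Rightarrow>real. integrable P f"
    unfolding P_def by (rule integrable_measure_pmf_finite) (rule fin_Pi[OF _ fq], simp)
  define N :: "(nat \<Rightarrow> nat) \<Rightarrow> nat \<Rightarrow> real" where "N = (\<lambda>a j. \<Sum>t\<in>{1..T}. if a t = j then 1 else 0 :: real)"
  define cd :: "(nat \<Rightarrow> nat) \<Rightarrow> nat \<Rightarrow> real" where "cd = (\<lambda>a j. N a j / real T - pstar j)"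
  define R :: "(nat \<Rightarrow> nat) \<Rightarrow> real" where "R = (\<lambda>a. - (\<Sum>j\<in>{1..K}. cd a j * A G (F j)) + d2 / 2 * K * Mx * (\<Sum>j\<in>{1..K}. (cd a j)^2))"
  have pw: "U G - U (Ftilde K F a T) \<le> R a" if a: "a \<in> set_pmf P" for a
  proof -
    define w where "w = (\<lambda>j. real (card {t\<in>{1..T}. a t = j}) / real T)"
    have aK: "\<forall>t\<in>{1..T}. a t \<in> {1..K}"
      using supp_Pi[OF a[unfolded P_def]] act_pmf_set[OF ps] unfolding q_def by blast
    have ws: "w \<in> prob_simplex K" unfolding w_def by (rule w_simplex[OF T aK])
    define H where "H = mix K F w"
    have Hf: "Ftilde K F a T = H" unfolding H_def w_def Ftilde_mix ..
    have HD: "H \<in> Dsimplex K F" unfolding H_def Dsimplex_def using ws by auto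
    have wc: "w j - pstar j = cd a j" for j
      unfolding w_def cd_def N_def using card_ind[of "{1..T}" "\<lambda>t. a t = j"] by simp
    have diff: "(\<lambda>y. H y - G y) = (\<lambda>y. \<Sum>j\<in>{1..K}. cd a j * F j y)"
      unfolding H_def G_def mix_def by (rule ext) (simp add: wc[symmetric] sum_subtractf left_diff_distrib)
    have ls: "(\<lambda>y. \<Sum>j\<in>{1..K}. cd a j * F j y) \<in> L \<and>
       A G (\<lambda>y. \<Sum>j\<in>{1..K}. cd a j * F j y) = (\<Sum>j\<in>{1..K}. cd a j * A G (F j)) \<and>
       nrm (\<lambda>y. \<Sum>j\<in>{1..K}. cd a j * F j y) \<le> (\<Sum>j\<in>{1..K}. \<bar>cd a j\<bar> * nrm (F j))"
      by (rule lin_sum[OF L _ _ FL]) (use Abl GL in auto)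
    have n0: "nrm (\<lambda>y. H y - G y) \<ge> 0" unfolding diff using fb_nrm_nonneg[OF L] ls by blast
    have "(nrm (\<lambda>y. H y - G y))^2 \<le> (\<Sum>j\<in>{1..K}. \<bar>cd a j\<bar> * nrm (F j))^2"
      using n0 ls unfolding diff by (intro power_mono) auto
    also have "\<dots> \<le> (\<Sum>j\<in>{1..K}. (\<bar>cd a j\<bar> * nrm (F j))^2) * card {1..K}"
      by (rule sum_squared_le_sum_of_squares)
    also have "\<dots> \<le> (\<Sum>j\<in>{1..K}. (cd a j)^2 * Mx) * K"
    proof -
      have "(\<Sum>j\<in>{1..K}. (\<bar>cd a j\<bar> * nrm (F j))^2) \<le> (\<Sum>j\<in>{1..K}. (cd a j)^2 * Mx)"
      proof (rule sum_mono)
        fix j assume j: "j \<in> {1..K}"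
        have "(\<bar>cd a j\<bar> * nrm (F j))^2 = (cd a j)^2 * (nrm (F j))^2" by (simp add: power_mult_distrib)
        also have "\<dots> \<le> (cd a j)^2 * Mx" by (rule mult_left_mono[OF Mx[OF j]]) simp
        finally show "(\<bar>cd a j\<bar> * nrm (F j))^2 \<le> (cd a j)^2 * Mx" .
      qed
      moreover have "real (card {1..K}) = real K" by simp
      ultimately show ?thesis by (metis mult_right_mono of_nat_0_le_iff)
    qed
    finally have nb: "(nrm (\<lambda>y. H y - G y))^2 \<le> K * Mx * (\<Sum>j\<in>{1..K}. (cd a j)^2)"
      by (simp add: sum_distrib_left[symmetric] algebra_simps)
    have m1: "\<bar>U H - U G - A G (\<lambda>y. H y - G y)\<bar> \<le> d2 / 2 * (nrm (\<lambda>y. H y - G y))\<^sup>2"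
      using Asm GD HD by blast
    have m2: "d2 / 2 * (nrm (\<lambda>y. H y - G y))\<^sup>2 \<le> d2 / 2 * (K * Mx * (\<Sum>j\<in>{1..K}. (cd a j)^2))"
      using nb d2 by (intro mult_left_mono) auto
    have m3: "A G (\<lambda>y. H y - G y) = (\<Sum>j\<in>{1..K}. cd a j * A G (F j))" using ls diff by simp
    have m4: "-(U H - U G - A G (\<lambda>y. H y - G y)) \<le> \<bar>U H - U G - A G (\<lambda>y. H y - G y)\<bar>" by simp
    have "U G - U H \<le> - (\<Sum>j\<in>{1..K}. cd a j * A G (F j)) + d2 / 2 * (K * Mx * (\<Sum>j\<in>{1..K}. (cd a j)^2))"
      using m1 m2 m4 unfolding m3 by linarith
    then show ?thesis unfolding Hf R_def by (simp add: algebra_simps)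
  qed
  have reg: "regret U K F pstar pstar T = measure_pmf.expectation P (\<lambda>a. U G - U (Ftilde K F a T))"
    unfolding regret_def P_def q_def G_def ..
  also have "\<dots> \<le> measure_pmf.expectation P R"
    by (rule integral_mono_AE) (auto simp: int AE_measure_pmf_iff pw)
  also have "measure_pmf.expectation P R = - (\<Sum>j\<in>{1..K}. A G (F j) * measure_pmf.expectation P (\<lambda>a. cd a j))
       + d2 / 2 * K * Mx * (\<Sum>j\<in>{1..K}. measure_pmf.expectation P (\<lambda>a. (cd a j)^2))"
    unfolding R_def by (simp add: int Bochner_Integration.integral_sum mult.commute)
  also have "\<dots> \<le> 0 + d2 / 2 * K * Mx * (\<Sum>j\<in>{1..K}. 1 / T)"
  proof -
    have pq: "pmf q j = pstar j" if "j \<in> {1..K}" for j using act_pmf_pmf[OF ps] that by (simp add: q_def)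
    have e1: "measure_pmf.expectation P (\<lambda>a. cd a j) = 0" if j: "j \<in> {1..K}" for j
    proof -
      have "measure_pmf.expectation P (\<lambda>a. N a j) = T * pmf q j"
        using moments(1)[of "{1..T}" q 0 j] fq unfolding P_def N_def by simp
      then show ?thesis unfolding cd_def using T pq[OF j] by (simp add: int)
    qed
    have e2: "measure_pmf.expectation P (\<lambda>a. (cd a j)^2) \<le> 1 / T" if j: "j \<in> {1..K}" for j
      using var_bound[of "{1..T}" q 0 j] fq T pq[OF j] unfolding P_def cd_def N_def by simp
    have "d2 / 2 * K * Mx * (\<Sum>j\<in>{1..K}. measure_pmf.expectation P (\<lambda>a. (cd a j)^2))
        \<le> d2 / 2 * K * Mx * (\<Sum>j\<in>{1..K}. 1 / T)"
      using d2 Mx0 by (intro mult_left_mono sum_mono e2) auto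
    then show ?thesis using e1 by simp
  qed
  also have "\<dots> = d2 / 2 * Mx * real K ^ 2 / real T" by (simp add: power2_eq_square)
  finally show ?thesis unfolding Mx_def .
qed

theorem proposition17:
  fixes K :: nat and F :: "nat \<Rightarrow> real \<Rightarrow> real"
    and M :: "'w measure" and X :: "nat \<Rightarrow> nat \<Rightarrow> 'w \<Rightarrow> real"
    and L :: "(real \<Rightarrow> real) set" and nrm :: "(real \<Rightarrow> real) \<Rightarrow> real"
    and U :: "(real \<Rightarrow> real) \<Rightarrow> real" and d2 :: real
  assumes K: "K \<ge> 1"
    and M: "prob_space M"
    and indep: "prob_space.indep_vars M (\<lambda>_. borel) (\<lambda>(i, s). X i s) ({1..K} \<times> {1..})"
    and law: "\<forall>i\<in>{1..K}. \<forall>s\<ge>1. cdf (distr M borel (X i s)) = F i"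
    and L: "fun_banach L nrm"
    and LD: "Dsimplex K F \<union> Dhat \<subseteq> L"
  shows "(smooth L nrm U K F d2 \<and> strongly_stable L nrm U K F M X \<longrightarrow>
            (\<forall>pstar. is_opt U K F pstar \<longrightarrow>
               (\<forall>T\<ge>1. regret U K F pstar pstar T
                   \<le> d2 / 2 * (MAX i\<in>{1..K}. (nrm (F i))\<^sup>2) * real K ^ 2 / real T)))
       \<and> (quasiconvex L U \<longrightarrow>
            (\<exists>i\<in>{1..K}. is_opt U K F (basis i) \<and>
               (\<forall>T\<ge>1. regret U K F (basis i) (basis i) T = 0)))"
  proof (intro conjI impI allI)
  fix pstar and T :: nat
  assume h: "smooth L nrm U K F d2 \<and> strongly_stable L nrm U K F M X" "is_opt U K F pstar" "1 \<le> T"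
  show "regret U K F pstar pstar T
                   \<le> d2 / 2 * (MAX i\<in>{1..K}. (nrm (F i))\<^sup>2) * real K ^ 2 / real T"
    using part1[OF K L LD _ h(2) h(3)] h(1) by blast
next
  assume "quasiconvex L U"
  then show "\<exists>i\<in>{1..K}. is_opt U K F (basis i) \<and> (\<forall>T\<ge>1. regret U K F (basis i) (basis i) T = 0)"
    using part2[OF K LD] by blast
qed

end
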